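(* Let $L\in\mathcal L(C_6)$ with $\{2,5\}\subset L$. Then $L=\{2,5\}$ or $L=\{2,4,5\}$, and both sets actually lie in $\mathcal L(C_6)$. In particular, $[2,5]\notin\mathcal L(C_6)$.
   Context: $C_n$ denotes a cyclic group of order $n$; $[a,b]=\{x\in\mathbb Z:a\le x\le b\}$. For a subset $G_0$ of a finite abelian group $G$, a sequence over $G_0$ is an element of the free abelian monoid $\mathcal F(G_0)$ with basis $G_0$ (a finite unordered list of elements of $G_0$, repetitions allowed). $\mathcal B(G_0)$ is the monoid of zero-sum sequences over $G_0$ (including the empty sequence). An atom is a minimal zero-sum sequence, i.e. a nonempty zero-sum sequence that is not a product of two nonempty zero-sum sequences. For $B\in\mathcal B(G_0)$, $\mathsf L(B)=\{k\in\mathbb N_0: B \text{ is a product of } k \text{ atoms}\}$, and $\mathcal L(G_0)=\{\mathsf L(B):B\in\mathcal B(G_0)\}$; $\mathcal L(G)$ is the case $G_0=G$. *)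

theory Defs
  imports Main "HOL-Library.Multiset" "HOL-Library.Numeral_Type"
begin

text \<open>Sequences over G0 are finite multisets with support in G0.
  The cyclic group C_6 is modelled as the additive group of the numeral type 6
  (integers modulo 6).\<close>

definition seqs :: "'a set \<Rightarrow> 'a multiset set" where
  "seqs G0 = {S. set_mset S \<subseteq> G0}"

definition zero_sum_seqs :: "('a::comm_monoid_add) set \<Rightarrow> 'a multiset set" where
  "zero_sum_seqs G0 = {S. S \<in> seqs G0 \<and> sum_mset S = 0}"

definition is_atom :: "('a::comm_monoid_add) set \<Rightarrow> 'a multiset \<Rightarrow> bool" where
  "is_atom G0 A \<longleftrightarrow> A \<in> zero_sum_seqs G0 \<and> A \<noteq> {#} \<and>
     \<not> (\<exists>S T. S \<in> zero_sum_seqs G0 \<and> T \<in> zero_sum_seqs G0 \<and> S \<noteq> {#} \<and> T \<noteq> {#} \<and> A = S + T)"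

definition length_set :: "('a::comm_monoid_add) set \<Rightarrow> 'a multiset \<Rightarrow> nat set" where
  "length_set G0 B = {k. \<exists>F :: 'a multiset multiset.
      size F = k \<and> (\<forall>A\<in>#F. is_atom G0 A) \<and> sum_mset F = B}"

definition system_of_length_sets :: "('a::comm_monoid_add) set \<Rightarrow> nat set set" where
  "system_of_length_sets G0 = {length_set G0 B | B. B \<in> zero_sum_seqs G0}"

end

theory Submission
  imports Defs
begin

definition ms :: "nat list \<Rightarrow> 6 multiset" where
  "ms c = replicate_mset (c!0) 0 + replicate_mset (c!1) 1 + replicate_mset (c!2) 2
        + replicate_mset (c!3) 3 + replicate_mset (c!4) 4 + replicate_mset (c!5) 5"

definition vec :: "6 multiset \<Rightarrow> nat list" where
  "vec B = [count B 0, count B 1, count B 2, count B 3, count B 4, count B 5]"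

definition zs :: "nat list \<Rightarrow> bool" where
  "zs c = ((c!1 + 2*c!2 + 3*c!3 + 4*c!4 + 5*c!5) mod 6 = 0)"

lemma u6: "(UNIV::6 set) = {0,1,2,3,4,5}"
proof -
  have "{0,1,2,3,4,5::6} = UNIV" by (rule card_subset_eq) simp_all
  then show ?thesis by simp
qed

lemma x6: "(x::6) = 0 \<or> x = 1 \<or> x = 2 \<or> x = 3 \<or> x = 4 \<or> x = 5"
  using u6 by blast

lemma all6: "(\<forall>x::6. P x) \<longleftrightarrow> P 0 \<and> P 1 \<and> P 2 \<and> P 3 \<and> P 4 \<and> P 5"
  by (metis x6)

lemma len6: "length c = 6 \<Longrightarrow> \<exists>a b d e f g. c = [a,b,d,e,f,g]"
  by (simp add: length_Suc_conv numeral_eq_Suc) blast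

lemma vec_ms: "length c = 6 \<Longrightarrow> vec (ms c) = c"
  using len6[of c] by (auto simp: vec_def ms_def)

lemma ms_vec: "ms (vec B) = B"
proof (rule multiset_eqI)
  fix x :: 6
  show "count (ms (vec B)) x = count B x"
    using x6[of x] by (auto simp: vec_def ms_def)
qed

lemma len_vec[simp]: "length (vec B) = 6" by (simp add: vec_def)

lemma size_ms: "length c = 6 \<Longrightarrow> size (ms c) = sum_list c"
  using len6[of c] by (auto simp: ms_def)

lemma sum_ms: "length c = 6 \<Longrightarrow> sum_mset (ms c) = 0 \<longleftrightarrow> zs c"
proof -
  assume "length c = 6"
  then obtain a b d e f g where c: "c = [a,b,d,e,f,g]" using len6 by blast
  have "sum_mset (ms c) = of_nat (b + 2*d + 3*e + 4*f + 5*g)"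
    by (simp add: c ms_def algebra_simps)
  then have "sum_mset (ms c) = 0 \<longleftrightarrow> CHAR(6) dvd (b + 2*d + 3*e + 4*f + 5*g)"
    by (simp only: of_nat_eq_0_iff_char_dvd)
  then show ?thesis
    by (simp add: zs_def c dvd_eq_mod_eq_0)
qed

lemma sub_ms: "length c = 6 \<Longrightarrow> length d = 6 \<Longrightarrow> ms c \<subseteq># ms d \<longleftrightarrow> list_all2 (\<le>) c d"
proof -
  assume "length c = 6" "length d = 6"
  then obtain a b e f g h a' b' e' f' g' h' where c: "c = [a,b,e,f,g,h]" and d: "d = [a',b',e',f',g',h']"
    using len6 by metis
  have cc: "count (ms c) 0 = a" "count (ms c) 1 = b" "count (ms c) 2 = e" "count (ms c) 3 = f"
     "count (ms c) 4 = g" "count (ms c) 5 = h" by (simp_all add: c ms_def)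
  have dd: "count (ms d) 0 = a'" "count (ms d) 1 = b'" "count (ms d) 2 = e'" "count (ms d) 3 = f'"
     "count (ms d) 4 = g'" "count (ms d) 5 = h'" by (simp_all add: d ms_def)
  show ?thesis
    unfolding subseteq_mset_def
  proof
    assume h: "\<forall>x. count (ms c) x \<le> count (ms d) x"
    then have "a \<le> a'" "b \<le> b'" "e \<le> e'" "f \<le> f'" "g \<le> g'" "h \<le> h'"
      by (metis cc dd)+
    then show "list_all2 (\<le>) c d"
      by (simp add: c d)
  next
    assume "list_all2 (\<le>) c d"
    then have *: "a \<le> a'" "b \<le> b'" "e \<le> e'" "f \<le> f'" "g \<le> g'" "h \<le> h'"
      by (simp_all add: c d)
    show "\<forall>x. count (ms c) x \<le> count (ms d) x"
    proof
      fix x :: 6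
      show "count (ms c) x \<le> count (ms d) x"
        using x6[of x] * cc dd by auto
    qed
  qed
qed

lemma add_ms: "length c = 6 \<Longrightarrow> length d = 6 \<Longrightarrow> ms c + ms d = ms (map2 (+) c d)"
proof -
  assume "length c = 6" "length d = 6"
  then obtain a b e f g h a' b' e' f' g' h' where c: "c = [a,b,e,f,g,h]" and d: "d = [a',b',e',f',g',h']"
    using len6 by metis
  show ?thesis
    unfolding multiset_eq_iff all6 by (simp add: c d ms_def)
qed

lemma diff_ms: "length c = 6 \<Longrightarrow> length d = 6 \<Longrightarrow> ms d - ms c = ms (map2 (-) d c)"
proof -
  assume "length c = 6" "length d = 6"
  then obtain a b e f g h a' b' e' f' g' h' where c: "c = [a,b,e,f,g,h]" and d: "d = [a',b',e',f',g',h']"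
    using len6 by metis
  show ?thesis
    unfolding multiset_eq_iff all6 by (simp add: c d ms_def)
qed

lemma mem_ms: "length c = 6 \<Longrightarrow> i < 6 \<Longrightarrow> (of_nat i \<in># ms c) \<longleftrightarrow> 0 < c!i"
proof -
  assume "length c = 6" "i < 6"
  then obtain a b e f g h where c: "c = [a,b,e,f,g,h]" using len6 by metis
  have cc: "count (ms c) 0 = c!0" "count (ms c) 1 = c!1" "count (ms c) 2 = c!2" "count (ms c) 3 = c!3"
     "count (ms c) 4 = c!4" "count (ms c) 5 = c!5" by (simp_all add: c ms_def)
  have "i = 0 \<or> i = 1 \<or> i = 2 \<or> i = 3 \<or> i = 4 \<or> i = 5" using \<open>i<6\<close> by arith
  then show ?thesis
    unfolding count_greater_zero_iff[symmetric]
    by (elim disjE) (simp_all only: cc of_nat_0 of_nat_1 of_nat_numeral)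
qed


primrec subvecs :: "nat list \<Rightarrow> nat list list" where
  "subvecs [] = [[]]"
| "subvecs (x#xs) = concat (map (\<lambda>i. map (Cons i) (subvecs xs)) [0..<Suc x])"

primrec vecs :: "nat \<Rightarrow> nat \<Rightarrow> nat list list" where
  "vecs 0 s = [[]]"
| "vecs (Suc n) s = concat (map (\<lambda>i. map (Cons i) (vecs n (s - i))) [0..<Suc s])"

definition atomv :: "nat list \<Rightarrow> bool" where
  "atomv c = (0 < sum_list c \<and> zs c \<and> (\<forall>d\<in>set (subvecs c). 0 < sum_list d \<and> d \<noteq> c \<longrightarrow> \<not> zs d))"

lemma subvecs_iff: "d \<in> set (subvecs c) \<longleftrightarrow> list_all2 (\<le>) d c"
proof (induction c arbitrary: d)
  case Nil then show ?case by auto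
next
  case (Cons x xs) then show ?case by (cases d) (auto simp: image_iff less_Suc_eq_le simp del: upt_Suc)
qed

lemma vecs_iff: "c \<in> set (vecs n s) \<longleftrightarrow> length c = n \<and> sum_list c \<le> s"
proof (induction n arbitrary: c s)
  case 0 then show ?case by auto
next
  case (Suc n) then show ?case by (cases c) (auto simp: image_iff less_Suc_eq_le simp del: upt_Suc)
qed

lemma zss: "zero_sum_seqs UNIV = {S. sum_mset S = 0}"
  by (auto simp: zero_sum_seqs_def seqs_def)

lemma atom_iff: "is_atom UNIV (A::6 multiset) \<longleftrightarrow> sum_mset A = 0 \<and> A \<noteq> {#} \<and>
   (\<forall>S. S \<subseteq># A \<longrightarrow> S \<noteq> {#} \<longrightarrow> S \<noteq> A \<longrightarrow> sum_mset S \<noteq> 0)"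
proof
  assume a: "is_atom UNIV A"
  then have A0: "sum_mset A = 0" "A \<noteq> {#}" by (auto simp: is_atom_def zss)
  have nd: "\<not> (\<exists>S T. sum_mset S = 0 \<and> sum_mset T = 0 \<and> S \<noteq> {#} \<and> T \<noteq> {#} \<and> A = S + T)"
    using a by (auto simp: is_atom_def zss)
  have "sum_mset S \<noteq> 0" if "S \<subseteq># A" "S \<noteq> {#}" "S \<noteq> A" for S
  proof
    assume s0: "sum_mset S = 0"
    have AT: "A = S + (A - S)" using that(1) by (simp add: subset_mset.add_diff_inverse)
    then have "A - S \<noteq> {#}" using that(3) by auto
    moreover have "sum_mset (A - S) = 0" using AT A0 s0 by (metis add.left_neutral sum_mset.union)
    ultimately show False using nd s0 AT that(2) by blast
  qed
  then show "sum_mset A = 0 \<and> A \<noteq> {#} \<and>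
   (\<forall>S. S \<subseteq># A \<longrightarrow> S \<noteq> {#} \<longrightarrow> S \<noteq> A \<longrightarrow> sum_mset S \<noteq> 0)" using A0 by blast
next
  assume h: "sum_mset A = 0 \<and> A \<noteq> {#} \<and>
   (\<forall>S. S \<subseteq># A \<longrightarrow> S \<noteq> {#} \<longrightarrow> S \<noteq> A \<longrightarrow> sum_mset S \<noteq> 0)"
  show "is_atom UNIV A"
    unfolding is_atom_def zss
  proof (intro conjI notI)
    show "A \<in> {S. sum_mset S = 0}" using h by simp
    show "A = {#} \<Longrightarrow> False" using h by simp
    assume "\<exists>S T. S \<in> {S. sum_mset S = 0} \<and> T \<in> {S. sum_mset S = 0} \<and> S \<noteq> {#} \<and> T \<noteq> {#} \<and> A = S + T"
    then obtain S T where "sum_mset S = 0" "S \<noteq> {#}" "T \<noteq> {#}" "A = S + T" by auto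
    then show False using h by (metis add_cancel_left_right mset_subset_eq_add_left)
  qed
qed

lemma atom_ms: "length c = 6 \<Longrightarrow> is_atom UNIV (ms c) \<longleftrightarrow> atomv c"
proof -
  assume l: "length c = 6"
  show ?thesis
  proof
    assume a: "is_atom UNIV (ms c)"
    then have h: "sum_mset (ms c) = 0" "ms c \<noteq> {#}"
      "\<And>S. S \<subseteq># ms c \<Longrightarrow> S \<noteq> {#} \<Longrightarrow> S \<noteq> ms c \<Longrightarrow> sum_mset S \<noteq> 0"
      unfolding atom_iff by blast+
    have "0 < sum_list c" using h(2) size_ms[OF l] by (metis gr0I size_eq_0_iff_empty)
    moreover have "zs c" using h(1) sum_ms[OF l] by simp
    moreover have "\<not> zs d" if "d \<in> set (subvecs c)" "0 < sum_list d" "d \<noteq> c" for d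
    proof -
      have la: "list_all2 (\<le>) d c" using that(1) subvecs_iff by blast
      then have ld: "length d = 6" using l list_all2_lengthD by metis
      have "ms d \<subseteq># ms c" using sub_ms[OF ld l] la by simp
      moreover have "ms d \<noteq> {#}"
      proof
        assume "ms d = {#}" then have "sum_list d = 0" using size_ms[OF ld] by simp
        with that(2) show False by simp
      qed
      moreover have "ms d \<noteq> ms c" using vec_ms[OF ld] vec_ms[OF l] that(3) by metis
      ultimately have "sum_mset (ms d) \<noteq> 0" using h(3) by blast
      then show ?thesis using sum_ms[OF ld] by simp
    qed
    ultimately show "atomv c" unfolding atomv_def by blast
  next
    assume a: "atomv c"
    show "is_atom UNIV (ms c)"
      unfolding atom_iff
    proof (intro conjI allI impI)
      show "sum_mset (ms c) = 0" using a sum_ms[OF l] by (simp add: atomv_def)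
      show "ms c \<noteq> {#}"
      proof
        assume "ms c = {#}" then have "sum_list c = 0" using size_ms[OF l] by simp
        with a show False by (simp add: atomv_def)
      qed
      fix S assume S: "S \<subseteq># ms c" "S \<noteq> {#}" "S \<noteq> ms c"
      have SS: "S = ms (vec S)" by (simp add: ms_vec)
      have "list_all2 (\<le>) (vec S) c" using sub_ms[of "vec S" c] l S(1) SS by simp
      then have "vec S \<in> set (subvecs c)" using subvecs_iff by blast
      moreover have "0 < sum_list (vec S)" using size_ms[of "vec S"] SS S(2)
        by (metis gr0I len_vec size_eq_0_iff_empty)
      moreover have "vec S \<noteq> c" using SS S(3) by metis
      ultimately have "\<not> zs (vec S)" using a by (auto simp: atomv_def)
      then show "sum_mset S \<noteq> 0" using sum_ms[of "vec S"] SS by simp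
    qed
  qed
qed

lemma dav: "is_atom UNIV (A::6 multiset) \<Longrightarrow> size A \<le> 6"
proof (rule ccontr)
  assume at: "is_atom UNIV A" and big: "\<not> size A \<le> 6"
  obtain xs where A: "A = mset xs" using ex_mset by metis
  define p where "p = (\<lambda>i. sum_list (take i xs))"
  have "\<not> inj_on p {0..6::nat}"
  proof
    assume "inj_on p {0..6::nat}"
    then have "card (p ` {0..6}) = 7" by (simp add: card_image)
    moreover have "card (p ` {0..6}) \<le> CARD(6)" by (rule card_mono) auto
    ultimately show False by simp
  qed
  then obtain a b where ab: "a \<in> {0..6}" "b \<in> {0..6}" "a \<noteq> b" "p a = p b"
    unfolding inj_on_def by blast
  define i where "i = min a b"
  define j where "j = max a b"
  have ij: "i < j" "j \<le> 6" "p i = p j" using ab unfolding i_def j_def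
    by (auto simp: min_def max_def)
  define S where "S = mset (drop i (take j xs))"
  define T where "T = mset (take i xs) + mset (drop j xs)"
  have tj: "take j xs = take i xs @ drop i (take j xs)"
    using ij(1) by (metis append_take_drop_id min.strict_order_iff take_take)
  have m1: "mset xs = mset (take j xs) + mset (drop j xs)" by (metis append_take_drop_id mset_append)
  have m2: "mset (take j xs) = mset (take i xs) + S" unfolding S_def by (metis tj mset_append)
  have AST: "A = S + T" unfolding A T_def using m1 m2 by (simp add: ac_simps)
  have "sum_list (take j xs) = sum_list (take i xs) + sum_list (drop i (take j xs))"
    by (subst tj) simp
  then have sS: "sum_mset S = 0" using ij(3) unfolding S_def p_def
    by (simp add: sum_mset_sum_list)
  have lx: "length xs > 6" using big A by simp
  have "size S = j - i" using lx ij unfolding S_def by simp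
  then have S0: "S \<noteq> {#}" using ij by auto
  have "size T = i + (length xs - j)" using lx ij unfolding T_def by simp
  then have T0: "T \<noteq> {#}" using lx ij by auto
  have sA: "sum_mset A = 0" using at by (simp add: atom_iff)
  then have sT: "sum_mset T = 0" using AST sS by simp
  show False using at S0 T0 sS sT AST unfolding is_atom_def zss by blast
qed

lemma ls_empty: "length_set UNIV ({#}::6 multiset) = {0}"
proof -
  have "F = {#}" if "\<forall>A\<in>#F. is_atom UNIV A" "sum_mset F = ({#}::6 multiset)" for F
  proof (rule ccontr)
    assume "F \<noteq> {#}"
    then obtain A where A: "A \<in># F" by blast
    then obtain F' where "F = add_mset A F'" by (metis multi_member_split)
    then have "A = {#}" using that(2) by simp
    moreover have "is_atom UNIV A" using that(1) A by blast
    ultimately show False by (simp add: is_atom_def)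
  qed
  then have "k = 0" if "k \<in> length_set UNIV ({#}::6 multiset)" for k
    using that unfolding length_set_def by fastforce
  moreover have "0 \<in> length_set UNIV ({#}::6 multiset)"
    unfolding length_set_def by (intro CollectI exI[of _ "{#}"]) simp
  ultimately show ?thesis by blast
qed

lemma ls_rec: "x \<in># B \<Longrightarrow> length_set UNIV (B::6 multiset) =
   {Suc k | k A. is_atom UNIV A \<and> A \<subseteq># B \<and> x \<in># A \<and> k \<in> length_set UNIV (B - A)}"
proof (intro set_eqI iffI)
  fix m assume x: "x \<in># B" and "m \<in> length_set UNIV B"
  then obtain F where F: "size F = m" "\<forall>A\<in>#F. is_atom UNIV A" "sum_mset F = B"
    unfolding length_set_def by blast
  then obtain A where A: "A \<in># F" "x \<in># A" using x
    by (metis in_Union_mset_iff) 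
  then obtain F' where F': "F = add_mset A F'" by (metis multi_member_split)
  have "B = A + sum_mset F'" using F(3) F' by simp
  then have "A \<subseteq># B" "B - A = sum_mset F'" by simp_all
  moreover have "size F' \<in> length_set UNIV (B - A)" using F F' \<open>B - A = sum_mset F'\<close>
    unfolding length_set_def by auto
  moreover have "m = Suc (size F')" using F F' by simp
  moreover have "is_atom UNIV A" using F(2) A by simp
  ultimately show "m \<in> {Suc k | k A. is_atom UNIV A \<and> A \<subseteq># B \<and> x \<in># A \<and> k \<in> length_set UNIV (B - A)}"
    using A by blast
next
  fix m assume "m \<in> {Suc k | k A. is_atom UNIV A \<and> A \<subseteq># B \<and> x \<in># A \<and> k \<in> length_set UNIV (B - A)}"
  then obtain k A where h: "m = Suc k" "is_atom UNIV A" "A \<subseteq># B" "k \<in> length_set UNIV (B - A)" by blast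
  then obtain F where F: "size F = k" "\<forall>A\<in>#F. is_atom UNIV A" "sum_mset F = B - A"
    unfolding length_set_def by blast
  have "sum_mset (add_mset A F) = B" using F(3) h(3) by (simp add: subset_mset.add_diff_inverse)
  then show "m \<in> length_set UNIV B" unfolding length_set_def using F h by (intro CollectI exI[of _ "add_mset A F"]) auto
qed


definition atoms20 :: "nat list list" where
 "atoms20 = [[1,0,0,0,0,0],[0,0,0,2,0,0],[0,0,1,0,1,0],[0,1,0,0,0,1],
   [0,0,0,0,3,0],[0,0,0,1,1,1],[0,0,1,0,0,2],[0,0,3,0,0,0],[0,1,1,1,0,0],[0,2,0,0,1,0],
   [0,0,0,0,2,2],[0,0,0,1,0,3],[0,0,2,1,0,1],[0,1,0,1,2,0],[0,2,2,0,0,0],[0,3,0,1,0,0],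
   [0,0,0,0,1,4],[0,4,1,0,0,0],[0,0,0,0,0,6],[0,6,0,0,0,0]]"

definition piv :: "nat list \<Rightarrow> nat" where
  "piv c = length (takeWhile (\<lambda>x. x = 0) c)"

primrec Lv :: "nat \<Rightarrow> nat list \<Rightarrow> nat list" where
  "Lv 0 c = (if sum_list c = 0 then [0] else [])"
| "Lv (Suc n) c = (if sum_list c = 0 then [0] else
     remdups (concat (map (\<lambda>a. map Suc (Lv n (map2 (-) c a)))
        (filter (\<lambda>a. 0 < a ! piv c \<and> list_all2 (\<le>) a c) atoms20))))"

lemma C1: "\<forall>c\<in>set (vecs 6 6). atomv c \<longrightarrow> c \<in> set atoms20"
  by code_simp
lemma C2: "\<forall>c\<in>set atoms20. atomv c \<and> length c = 6 \<and> sum_list c \<le> 6 \<and> 2 \<le> sum_list c + c!0"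
  by code_simp

definition good :: "nat list \<Rightarrow> nat list \<Rightarrow> bool" where
  "good u v = (let w = map2 (+) u v; l = Lv 12 w in
     if 10 \<le> sum_list w + w!0 then (2 \<in> set l \<and> 5 \<in> set l \<longrightarrow> sort l = [2,5] \<or> sort l = [2,4,5]) else True)"

lemma C3_0: "\<forall>v\<in>set atoms20. good [1,0,0,0,0,0] v" by code_simp
lemma C3_1: "\<forall>v\<in>set atoms20. good [0,0,0,2,0,0] v" by code_simp
lemma C3_2: "\<forall>v\<in>set atoms20. good [0,0,1,0,1,0] v" by code_simp
lemma C3_3: "\<forall>v\<in>set atoms20. good [0,1,0,0,0,1] v" by code_simp
lemma C3_4: "\<forall>v\<in>set atoms20. good [0,0,0,0,3,0] v" by code_simp
lemma C3_5: "\<forall>v\<in>set atoms20. good [0,0,0,1,1,1] v" by code_simp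
lemma C3_6: "\<forall>v\<in>set atoms20. good [0,0,1,0,0,2] v" by code_simp
lemma C3_7: "\<forall>v\<in>set atoms20. good [0,0,3,0,0,0] v" by code_simp
lemma C3_8: "\<forall>v\<in>set atoms20. good [0,1,1,1,0,0] v" by code_simp
lemma C3_9: "\<forall>v\<in>set atoms20. good [0,2,0,0,1,0] v" by code_simp
lemma C3_10: "\<forall>v\<in>set atoms20. good [0,0,0,0,2,2] v" by code_simp
lemma C3_11: "\<forall>v\<in>set atoms20. good [0,0,0,1,0,3] v" by code_simp
lemma C3_12: "\<forall>v\<in>set atoms20. good [0,0,2,1,0,1] v" by code_simp
lemma C3_13: "\<forall>v\<in>set atoms20. good [0,1,0,1,2,0] v" by code_simp
lemma C3_14: "\<forall>v\<in>set atoms20. good [0,2,2,0,0,0] v" by code_simp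
lemma C3_15: "\<forall>v\<in>set atoms20. good [0,3,0,1,0,0] v" by code_simp
lemma C3_16: "\<forall>v\<in>set atoms20. good [0,0,0,0,1,4] v" by code_simp
lemma C3_17: "\<forall>v\<in>set atoms20. good [0,4,1,0,0,0] v" by code_simp
lemma C3_18: "\<forall>v\<in>set atoms20. good [0,0,0,0,0,6] v" by code_simp
lemma C3_19: "\<forall>v\<in>set atoms20. good [0,6,0,0,0,0] v" by code_simp

lemma C3: "\<forall>u\<in>set atoms20. \<forall>v\<in>set atoms20. good u v"
  using C3_0 C3_1 C3_2 C3_3 C3_4 C3_5 C3_6 C3_7 C3_8 C3_9 C3_10 C3_11 C3_12 C3_13 C3_14 C3_15 C3_16 C3_17 C3_18 C3_19
  unfolding atoms20_def[of] by (simp only: list.set ball_simps(7) ball_empty)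

lemma C4: "sort (Lv 11 [0,4,1,0,0,6]) = [2,5] \<and> sort (Lv 11 [0,4,1,0,1,4]) = [2,4,5]"
  by code_simp

lemma atom_char: "is_atom UNIV A \<longleftrightarrow> vec A \<in> set atoms20"
proof
  assume a: "is_atom UNIV A"
  have "size A \<le> 6" using dav[OF a] .
  then have "sum_list (vec A) \<le> 6" using size_ms[of "vec A"] by (simp add: ms_vec)
  then have "vec A \<in> set (vecs 6 6)" by (simp add: vecs_iff)
  moreover have "atomv (vec A)" using a atom_ms[of "vec A"] by (simp add: ms_vec)
  ultimately show "vec A \<in> set atoms20" using C1 by blast
next
  assume "vec A \<in> set atoms20"
  then have "atomv (vec A)" using C2 by auto
  then show "is_atom UNIV A" using atom_ms[of "vec A"] by (simp add: ms_vec)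
qed

lemma atom20: "a \<in> set atoms20 \<Longrightarrow> is_atom UNIV (ms a)"
proof -
  assume "a \<in> set atoms20"
  then have "atomv a" "length a = 6" using C2 by auto
  then show ?thesis by (simp add: atom_ms)
qed

lemma sum_le: "list_all2 (\<le>) (a::nat list) c \<Longrightarrow> sum_list a \<le> sum_list c"
  by (induction rule: list_all2_induct) auto

lemma sum_minus: "list_all2 (\<le>) (a::nat list) c \<Longrightarrow> sum_list (map2 (-) c a) = sum_list c - sum_list a"
proof (induction rule: list_all2_induct)
  case Nil then show ?case by simp
next
  case (Cons x xs y ys)
  then have "sum_list xs \<le> sum_list ys" using sum_le by blast
  with Cons show ?case by simp
qed

lemma sum_plus: "length (a::nat list) = length c \<Longrightarrow> sum_list (map2 (+) a c) = sum_list a + sum_list c"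
proof (induction a c rule: list_induct2)
  case Nil then show ?case by simp
next
  case (Cons x xs y ys) then show ?case by (simp add: algebra_simps)
qed

lemma piv_ok: "0 < sum_list c \<Longrightarrow> piv c < length c \<and> 0 < c ! piv c"
proof (induction c)
  case Nil then show ?case by simp
next
  case (Cons x xs)
  show ?case
  proof (cases "x = 0")
    case True
    then have "0 < sum_list xs" using Cons.prems by simp
    then have "piv xs < length xs \<and> 0 < xs ! piv xs" using Cons.IH by blast
    moreover have "piv (x # xs) = Suc (piv xs)" using True by (simp add: piv_def)
    ultimately show ?thesis by simp
  next
    case False
    then have "piv (x # xs) = 0" by (simp add: piv_def)
    then show ?thesis using False by simp
  qed
qed

lemma Lv_correct: "\<forall>c. length c = 6 \<longrightarrow> sum_list c \<le> n \<longrightarrow> set (Lv n c) = length_set UNIV (ms c)"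
proof (induction n)
  case 0
  show ?case
  proof (intro allI impI)
    fix c :: "nat list" assume "length c = 6" "sum_list c \<le> 0"
    then have "size (ms c) = 0" using size_ms by simp
    then have "ms c = {#}" by simp
    then show "set (Lv 0 c) = length_set UNIV (ms c)" using \<open>sum_list c \<le> 0\<close> ls_empty by simp
  qed
next
  case (Suc n)
  show ?case
  proof (intro allI impI)
    fix c :: "nat list" assume l: "length c = 6" and sc: "sum_list c \<le> Suc n"
    show "set (Lv (Suc n) c) = length_set UNIV (ms c)"
    proof (cases "sum_list c = 0")
      case True
      then have "size (ms c) = 0" using size_ms[OF l] by simp
      then have "ms c = {#}" by simp
      then show ?thesis using True ls_empty by simp
    next
      case False
      define p where "p = piv c"
      have "0 < sum_list c" using False gr0I by blast
      then have p: "p < 6" "0 < c ! p" using piv_ok[of c] l unfolding p_def by simp_all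
      define x :: 6 where "x = of_nat p"
      have xB: "x \<in># ms c" using mem_ms[OF l p(1)] p(2) unfolding x_def by simp
      have R: "length_set UNIV (ms c) =
        {Suc k | k A. is_atom UNIV A \<and> A \<subseteq># ms c \<and> x \<in># A \<and> k \<in> length_set UNIV (ms c - A)}"
        using ls_rec[OF xB] .
      have L: "set (Lv (Suc n) c) = {Suc k | k a. a \<in> set atoms20 \<and> 0 < a ! p \<and> list_all2 (\<le>) a c
                  \<and> k \<in> set (Lv n (map2 (-) c a))}"
      proof -
        have "set (Lv (Suc n) c) = set (concat (map (\<lambda>a. map Suc (Lv n (map2 (-) c a)))
          (filter (\<lambda>a. 0 < a ! p \<and> list_all2 (\<le>) a c) atoms20)))"
          unfolding Lv.simps(2) if_not_P[OF False] set_remdups p_def ..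
        then show ?thesis by auto
      qed
      have key: "a \<in> set atoms20 \<Longrightarrow> list_all2 (\<le>) a c \<Longrightarrow>
           set (Lv n (map2 (-) c a)) = length_set UNIV (ms c - ms a)" for a
      proof -
        assume a: "a \<in> set atoms20" "list_all2 (\<le>) a c"
        have la: "length a = 6" "0 < sum_list a" using a(1) C2 by (auto simp: atomv_def)
        have "sum_list (map2 (-) c a) \<le> n" using sum_minus[OF a(2)] la sc by simp
        moreover have "length (map2 (-) c a) = 6" using l la by simp
        ultimately have "set (Lv n (map2 (-) c a)) = length_set UNIV (ms (map2 (-) c a))"
          using Suc.IH by simp
        then show ?thesis using diff_ms[OF la(1) l] by simp
      qed
      show ?thesis
      proof (intro set_eqI iffI)
        fix m assume "m \<in> set (Lv (Suc n) c)"
        then obtain k a where h: "m = Suc k" "a \<in> set atoms20" "0 < a ! p" "list_all2 (\<le>) a c"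
           "k \<in> set (Lv n (map2 (-) c a))" unfolding L by blast
        have la: "length a = 6" using h(2) C2 by auto
        have "is_atom UNIV (ms a)" using atom20[OF h(2)] .
        moreover have "ms a \<subseteq># ms c" using sub_ms[OF la l] h(4) by simp
        moreover have "x \<in># ms a" using mem_ms[OF la p(1)] h(3) unfolding x_def by simp
        moreover have "k \<in> length_set UNIV (ms c - ms a)" using key[OF h(2) h(4)] h(5) by simp
        ultimately show "m \<in> length_set UNIV (ms c)" unfolding R using h(1) by blast
      next
        fix m assume "m \<in> length_set UNIV (ms c)"
        then obtain k A where h: "m = Suc k" "is_atom UNIV A" "A \<subseteq># ms c" "x \<in># A"
          "k \<in> length_set UNIV (ms c - A)" unfolding R by blast
        define a where "a = vec A"
        have A: "A = ms a" unfolding a_def by (simp add: ms_vec)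
        have a20: "a \<in> set atoms20" using h(2) atom_char unfolding a_def by blast
        have la: "length a = 6" unfolding a_def by simp
        have le: "list_all2 (\<le>) a c" using sub_ms[OF la l] h(3) A by simp
        have "0 < a ! p" using mem_ms[OF la p(1)] h(4) A unfolding x_def by simp
        moreover have "k \<in> set (Lv n (map2 (-) c a))" using key[OF a20 le] h(5) A by simp
        ultimately show "m \<in> set (Lv (Suc n) c)" unfolding L using h(1) a20 le by blast
      qed
    qed
  qed
qed

lemma Lv_ms: "length c = 6 \<Longrightarrow> sum_list c \<le> n \<Longrightarrow> set (Lv n c) = length_set UNIV (ms c)"
  using Lv_correct by blast

lemma lv_bound: "\<forall>c. length c = 6 \<longrightarrow> (\<forall>k\<in>set (Lv n c). 2*k \<le> sum_list c + c!0)"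
proof (induction n)
  case 0 then show ?case by simp
next
  case (Suc n)
  show ?case
  proof (intro allI impI ballI)
    fix c k assume l: "length c = 6" and k: "k \<in> set (Lv (Suc n) c)"
    show "2*k \<le> sum_list c + c!0"
    proof (cases "sum_list c = 0")
      case True then show ?thesis using k by simp
    next
      case False
      have k2: "k \<in> set (concat (map (\<lambda>a. map Suc (Lv n (map2 (-) c a)))
          (filter (\<lambda>a. 0 < a ! piv c \<and> list_all2 (\<le>) a c) atoms20)))"
        using k unfolding Lv.simps(2) if_not_P[OF False] set_remdups .
      then obtain k' a where h: "k = Suc k'" "a \<in> set atoms20" "list_all2 (\<le>) a c"
        "k' \<in> set (Lv n (map2 (-) c a))" by auto
      have la: "length a = 6" "2 \<le> sum_list a + a!0" using h(2) C2 by auto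
      have "length (map2 (-) c a) = 6" using l la by simp
      then have ih: "2*k' \<le> sum_list (map2 (-) c a) + (map2 (-) c a)!0" using Suc.IH h(4) by blast
      have e1: "sum_list (map2 (-) c a) = sum_list c - sum_list a" using sum_minus[OF h(3)] .
      have e2: "(map2 (-) c a)!0 = c!0 - a!0" using l la by simp
      have s1: "sum_list a \<le> sum_list c" using sum_le[OF h(3)] .
      have s2: "a!0 \<le> c!0" using list_all2_nthD[OF h(3), of 0] la(1) by auto
      show ?thesis using ih e1 e2 s1 s2 la(2) h(1) by linarith
    qed
  qed
qed

theorem lemma3p1:
  shows "(\<forall>L \<in> system_of_length_sets (UNIV :: 6 set).
            {2, 5} \<subseteq> L \<longrightarrow> L = {2, 5} \<or> L = {2, 4, 5})
       \<and> {2, 5} \<in> system_of_length_sets (UNIV :: 6 set)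
       \<and> {2, 4, 5} \<in> system_of_length_sets (UNIV :: 6 set)
       \<and> {2..5} \<notin> system_of_length_sets (UNIV :: 6 set)"
proof -
  have U: "L = {2, 5} \<or> L = {2, 4, 5}"
    if hL: "L \<in> system_of_length_sets (UNIV :: 6 set)" "{2, 5} \<subseteq> L" for L
  proof -
    obtain B :: "6 multiset" where B: "L = length_set UNIV B" using hL(1) unfolding system_of_length_sets_def by blast
    have "2 \<in> length_set UNIV B" using hL(2) B by auto
    then obtain F where F: "size F = 2" "\<forall>A\<in>#F. is_atom UNIV A" "sum_mset F = B"
      unfolding length_set_def by blast
    obtain U F1 where F1: "F = add_mset U F1" "size F1 = 1"
      using F(1) size_eq_Suc_imp_eq_union[of F 1] by auto
    obtain V F2 where F2: "F1 = add_mset V F2" "size F2 = 0"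
      using F1(2) size_eq_Suc_imp_eq_union[of F1 0] by auto
    have BUV: "B = U + V" using F(3) F1 F2 by simp
    have u: "vec U \<in> set atoms20" "vec V \<in> set atoms20" using F(2) F1 F2 atom_char by auto
    define w where "w = map2 (+) (vec U) (vec V)"
    have Bw: "B = ms w" unfolding w_def BUV using add_ms[of "vec U" "vec V"] by (simp add: ms_vec)
    have lw: "length w = 6" unfolding w_def by simp
    have "sum_list (vec U) \<le> 6" "sum_list (vec V) \<le> 6" using u C2 by blast+
    then have "sum_list w \<le> 12" unfolding w_def using sum_plus[of "vec U" "vec V"] by simp
    then have Lw: "L = set (Lv 12 w)" using Lv_ms[OF lw] B Bw by simp
    have l2: "2 \<in> set (Lv 12 w)" "5 \<in> set (Lv 12 w)" using hL(2) Lw by auto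
    have "2*5 \<le> sum_list w + w!0" using lv_bound lw l2(2) by blast
    moreover have "good (vec U) (vec V)" using C3 u by blast
    ultimately have "sort (Lv 12 w) = [2,5] \<or> sort (Lv 12 w) = [2,4,5]"
      using l2 unfolding good_def Let_def w_def[symmetric] by simp
    moreover have "set (Lv 12 w) = set (sort (Lv 12 w))" by simp
    ultimately have "set (Lv 12 w) = set [2,5] \<or> set (Lv 12 w) = set [2,4,5]" by metis
    then show ?thesis using Lw by simp
  qed
  have E: "L \<in> system_of_length_sets (UNIV :: 6 set)" if "length c = 6" "zs c" "sum_list c \<le> 11"
    "L = set (Lv 11 c)" for L c
  proof -
    have "ms c \<in> zero_sum_seqs UNIV" using sum_ms[OF that(1)] that(2) by (simp add: zss)
    moreover have "L = length_set UNIV (ms c)" using Lv_ms[OF that(1) that(3)] that(4) by simp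
    ultimately show ?thesis unfolding system_of_length_sets_def by blast
  qed
  have S1: "set (Lv 11 [0,4,1,0,0,6]) = {2,5}"
  proof -
    have "set (Lv 11 [0,4,1,0,0,6]) = set (sort (Lv 11 [0,4,1,0,0,6]))" by simp
    also have "\<dots> = {2,5}" using C4 by simp
    finally show ?thesis .
  qed
  have S2: "set (Lv 11 [0,4,1,0,1,4]) = {2,4,5}"
  proof -
    have "set (Lv 11 [0,4,1,0,1,4]) = set (sort (Lv 11 [0,4,1,0,1,4]))" by simp
    also have "\<dots> = {2,4,5}" using C4 by simp
    finally show ?thesis .
  qed
  have E1: "{2, 5} \<in> system_of_length_sets (UNIV :: 6 set)"
    by (rule E[of "[0,4,1,0,0,6]"]) (simp_all only: S1, simp_all add: zs_def)
  have E2: "{2, 4, 5} \<in> system_of_length_sets (UNIV :: 6 set)"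
    by (rule E[of "[0,4,1,0,1,4]"]) (simp_all only: S2, simp_all add: zs_def)
  have N: "{2..5::nat} \<notin> system_of_length_sets (UNIV :: 6 set)"
  proof
    assume "{2..5::nat} \<in> system_of_length_sets (UNIV :: 6 set)"
    then have "{2..5::nat} = {2, 5} \<or> {2..5::nat} = {2, 4, 5}" using U by auto
    moreover have "(3::nat) \<in> {2..5}" "(3::nat) \<notin> {2,5}" "(3::nat) \<notin> {2,4,5}" by simp_all
    ultimately show False by metis
  qed
  show ?thesis using U E1 E2 N by blast
qed

end
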